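(* Let $P$ be a finite connected poset such that $J(P)$ is tCDE with edge density $c=\mathbb{E}(\mathrm{uni}_{J(P)};\mathrm{ddeg})$. Then the antichain cardinality statistic $I\mapsto\#\max(I)$ has average exactly $c$ along every orbit of rowmotion $\Phi_{\mathrm{row}}$ acting on $J(P)$. If moreover $P$ is ranked with maximum rank $r$, then the same holds for every orbit of $\Phi_{\mathrm{row}(\sigma)}$ acting on $J(P)$, for every permutation $\sigma$ of $\{0,1,\ldots,r\}$.
   Context: $J(P)$ is the lattice of order ideals of $P$ under inclusion; $\mathrm{ddeg}(I)$ (the number of elements covered by $I$) equals $\#\max(I)$; $\mathrm{uni}$ is uniform. $\mathcal{T}^+_p(I)=1$ iff $p\notin I$ and $p$ minimal in $P\setminus I$; $\mathcal{T}^-_p(I)=1$ iff $p\in I$ and $p$ maximal in $I$. $\mu$ is toggle-symmetric if $\mathbb{E}(\mu;\mathcal{T}^+_p)=\mathbb{E}(\mu;\mathcal{T}^-_p)$ for all $p$; $J(P)$ is tCDE if $\mathbb{E}(\mu;\mathrm{ddeg})=\mathbb{E}(\mathrm{uni}_{J(P)};\mathrm{ddeg})$ for every toggle-symmetric $\mu$. Rowmotion: $\Phi_{\mathrm{row}}(I):=\{x\in P: x\le y\text{ for some }y\in\min(P\setminus I)\}$. For ranked $P$ (rank function with $0$ in its image, increasing by 1 along covers), the toggle $\tau_p$ adds $p$ to $I$ if $p\notin I$ is minimal in $P\setminus I$, removes $p$ if $p\in I$ is maximal in $I$, and otherwise fixes $I$; $\tau_i$ is the composition of all $\tau_p$ with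 $\mathrm{rk}(p)=i$; $\Phi_{\mathrm{row}(\sigma)}:=\tau_{\sigma(0)}\circ\cdots\circ\tau_{\sigma(r)}$. *)

theory Defs
  imports Complex_Main
begin

definition is_poset :: "'a set \<Rightarrow> ('a \<Rightarrow> 'a \<Rightarrow> bool) \<Rightarrow> bool" where
  "is_poset P le \<longleftrightarrow>
     (\<forall>x\<in>P. le x x) \<and>
     (\<forall>x\<in>P. \<forall>y\<in>P. le x y \<and> le y x \<longrightarrow> x = y) \<and>
     (\<forall>x\<in>P. \<forall>y\<in>P. \<forall>z\<in>P. le x y \<and> le y z \<longrightarrow> le x z)"

definition comparability :: "'a set \<Rightarrow> ('a \<Rightarrow> 'a \<Rightarrow> bool) \<Rightarrow> ('a \<times> 'a) set" where
  "comparability P le = {(x, y). x \<in> P \<and> y \<in> P \<and> (le x y \<or> le y x)}"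

definition poset_connected :: "'a set \<Rightarrow> ('a \<Rightarrow> 'a \<Rightarrow> bool) \<Rightarrow> bool" where
  "poset_connected P le \<longleftrightarrow> (\<forall>x\<in>P. \<forall>y\<in>P. (x, y) \<in> (comparability P le)\<^sup>*)"

definition order_ideals :: "'a set \<Rightarrow> ('a \<Rightarrow> 'a \<Rightarrow> bool) \<Rightarrow> 'a set set" where
  "order_ideals P le = {I. I \<subseteq> P \<and> (\<forall>x\<in>I. \<forall>y\<in>P. le y x \<longrightarrow> y \<in> I)}"

definition maximal_elts :: "('a \<Rightarrow> 'a \<Rightarrow> bool) \<Rightarrow> 'a set \<Rightarrow> 'a set" where
  "maximal_elts le S = {x\<in>S. \<forall>y\<in>S. le x y \<longrightarrow> y = x}"

definition minimal_elts :: "('a \<Rightarrow> 'a \<Rightarrow> bool) \<Rightarrow> 'a set \<Rightarrow> 'a set" where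
  "minimal_elts le S = {x\<in>S. \<forall>y\<in>S. le y x \<longrightarrow> y = x}"

definition ddeg :: "('a \<Rightarrow> 'a \<Rightarrow> bool) \<Rightarrow> 'a set \<Rightarrow> nat" where
  "ddeg le I = card (maximal_elts le I)"

definition tplus :: "'a set \<Rightarrow> ('a \<Rightarrow> 'a \<Rightarrow> bool) \<Rightarrow> 'a \<Rightarrow> 'a set \<Rightarrow> real" where
  "tplus P le p I = (if p \<notin> I \<and> p \<in> minimal_elts le (P - I) then 1 else 0)"

definition tminus :: "('a \<Rightarrow> 'a \<Rightarrow> bool) \<Rightarrow> 'a \<Rightarrow> 'a set \<Rightarrow> real" where
  "tminus le p I = (if p \<in> I \<and> p \<in> maximal_elts le I then 1 else 0)"

definition is_distribution :: "'a set \<Rightarrow> ('a \<Rightarrow> 'a \<Rightarrow> bool) \<Rightarrow> ('a set \<Rightarrow> real) \<Rightarrow> bool" where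
  "is_distribution P le \<mu> \<longleftrightarrow>
     (\<forall>I\<in>order_ideals P le. \<mu> I \<ge> 0) \<and> (\<Sum>I\<in>order_ideals P le. \<mu> I) = 1"

definition expect :: "'a set \<Rightarrow> ('a \<Rightarrow> 'a \<Rightarrow> bool) \<Rightarrow> ('a set \<Rightarrow> real) \<Rightarrow> ('a set \<Rightarrow> real) \<Rightarrow> real" where
  "expect P le \<mu> f = (\<Sum>I\<in>order_ideals P le. \<mu> I * f I)"

definition uniform :: "'a set \<Rightarrow> ('a \<Rightarrow> 'a \<Rightarrow> bool) \<Rightarrow> 'a set \<Rightarrow> real" where
  "uniform P le I = 1 / real (card (order_ideals P le))"

definition toggle_symmetric :: "'a set \<Rightarrow> ('a \<Rightarrow> 'a \<Rightarrow> bool) \<Rightarrow> ('a set \<Rightarrow> real) \<Rightarrow> bool" where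
  "toggle_symmetric P le \<mu> \<longleftrightarrow>
     (\<forall>p\<in>P. expect P le \<mu> (tplus P le p) = expect P le \<mu> (tminus le p))"

definition tCDE :: "'a set \<Rightarrow> ('a \<Rightarrow> 'a \<Rightarrow> bool) \<Rightarrow> bool" where
  "tCDE P le \<longleftrightarrow>
     (\<forall>\<mu>. is_distribution P le \<mu> \<and> toggle_symmetric P le \<mu> \<longrightarrow>
        expect P le \<mu> (\<lambda>I. real (ddeg le I)) = expect P le (uniform P le) (\<lambda>I. real (ddeg le I)))"

definition rowmotion :: "'a set \<Rightarrow> ('a \<Rightarrow> 'a \<Rightarrow> bool) \<Rightarrow> 'a set \<Rightarrow> 'a set" where
  "rowmotion P le I = {x\<in>P. \<exists>y\<in>minimal_elts le (P - I). le x y}"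

definition orbit_of :: "('b \<Rightarrow> 'b) \<Rightarrow> 'b \<Rightarrow> 'b set" where
  "orbit_of f x = {(f ^^ k) x | k. True}"

definition orbit_avg :: "('b \<Rightarrow> 'b) \<Rightarrow> ('b \<Rightarrow> real) \<Rightarrow> 'b \<Rightarrow> real" where
  "orbit_avg f g x = (\<Sum>y\<in>orbit_of f x. g y) / real (card (orbit_of f x))"

definition covers :: "'a set \<Rightarrow> ('a \<Rightarrow> 'a \<Rightarrow> bool) \<Rightarrow> 'a \<Rightarrow> 'a \<Rightarrow> bool" where
  "covers P le x y \<longleftrightarrow> x \<in> P \<and> y \<in> P \<and> le x y \<and> x \<noteq> y \<and>
     \<not> (\<exists>z\<in>P. le x z \<and> le z y \<and> z \<noteq> x \<and> z \<noteq> y)"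

definition is_rank_function :: "'a set \<Rightarrow> ('a \<Rightarrow> 'a \<Rightarrow> bool) \<Rightarrow> ('a \<Rightarrow> nat) \<Rightarrow> bool" where
  "is_rank_function P le rk \<longleftrightarrow>
     (\<exists>x\<in>P. rk x = 0) \<and> (\<forall>x\<in>P. \<forall>y\<in>P. covers P le x y \<longrightarrow> rk y = rk x + 1)"

definition toggle :: "'a set \<Rightarrow> ('a \<Rightarrow> 'a \<Rightarrow> bool) \<Rightarrow> 'a \<Rightarrow> 'a set \<Rightarrow> 'a set" where
  "toggle P le p I =
     (if p \<notin> I \<and> p \<in> minimal_elts le (P - I) then insert p I
      else if p \<in> I \<and> p \<in> maximal_elts le I then I - {p}
      else I)"

text \<open>tau_i: composition of all toggles tau_p with rk p = i (taken in some enumeration order;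
  these toggles pairwise commute).\<close>
definition rank_toggle :: "'a set \<Rightarrow> ('a \<Rightarrow> 'a \<Rightarrow> bool) \<Rightarrow> ('a \<Rightarrow> nat) \<Rightarrow> nat \<Rightarrow> 'a set \<Rightarrow> 'a set" where
  "rank_toggle P le rk i =
     fold (toggle P le) (SOME xs. distinct xs \<and> set xs = {p\<in>P. rk p = i})"

text \<open>Phi_row(sigma) = tau_{sigma 0} o ... o tau_{sigma r}.\<close>
definition row_sigma :: "'a set \<Rightarrow> ('a \<Rightarrow> 'a \<Rightarrow> bool) \<Rightarrow> ('a \<Rightarrow> nat) \<Rightarrow> nat \<Rightarrow> (nat \<Rightarrow> nat)
    \<Rightarrow> 'a set \<Rightarrow> 'a set" where
  "row_sigma P le rk r \<sigma> I = foldr (\<lambda>i. rank_toggle P le rk (\<sigma> i)) [0..<Suc r] I"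

end

theory Submission
  imports Defs
begin


locale fposet =
  fixes P :: "'a set" and le :: "'a \<Rightarrow> 'a \<Rightarrow> bool"
  assumes finP: "finite P" and pos: "is_poset P le"
begin

lemma prefl: "x \<in> P \<Longrightarrow> le x x" using pos unfolding is_poset_def by blast
lemma pantisym: "x \<in> P \<Longrightarrow> y \<in> P \<Longrightarrow> le x y \<Longrightarrow> le y x \<Longrightarrow> x = y"
  using pos unfolding is_poset_def by blast
lemma ptrans: "x \<in> P \<Longrightarrow> y \<in> P \<Longrightarrow> z \<in> P \<Longrightarrow> le x y \<Longrightarrow> le y z \<Longrightarrow> le x z"
  using pos unfolding is_poset_def by blast

definition h where "h z = card {w\<in>P. le w z}"

lemma h_less:
  assumes "x \<in> P" "y \<in> P" "le x y" "x \<noteq> y" shows "h x < h y"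
proof -
  have "{w\<in>P. le w x} \<subseteq> {w\<in>P. le w y}" using assms ptrans by blast
  moreover have "y \<in> {w\<in>P. le w y}" using assms prefl by auto
  moreover have "y \<notin> {w\<in>P. le w x}" using assms pantisym by auto
  ultimately have "{w\<in>P. le w x} \<subset> {w\<in>P. le w y}" by blast
  then show ?thesis unfolding h_def by (intro psubset_card_mono) (use finP in auto)
qed

lemma ex_max_h:
  assumes "S \<subseteq> P" "y \<in> S" shows "\<exists>z\<in>S. \<forall>w\<in>S. h w \<le> h z"
proof -
  have fS: "finite S" using finP assms finite_subset by auto
  have "Max (h ` S) \<in> h ` S" using fS assms by (intro Max_in) auto
  then obtain z where zS: "z \<in> S" and hz: "h z = Max (h ` S)" by auto
  have "h w \<le> h z" if "w \<in> S" for w using fS that unfolding hz by (auto intro!: Max_ge)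
  then show ?thesis using zS by auto
qed

lemma ex_min_h:
  assumes "S \<subseteq> P" "y \<in> S" shows "\<exists>z\<in>S. \<forall>w\<in>S. h z \<le> h w"
proof -
  have fS: "finite S" using finP assms finite_subset by auto
  have "Min (h ` S) \<in> h ` S" using fS assms by (intro Min_in) auto
  then obtain z where zS: "z \<in> S" and hz: "h z = Min (h ` S)" by auto
  have "h z \<le> h w" if "w \<in> S" for w using fS that unfolding hz by (auto intro!: Min_le)
  then show ?thesis using zS by auto
qed

lemma cover_below:
  assumes "y \<in> P" "p \<in> P" "le y p" "y \<noteq> p"
  shows "\<exists>z\<in>P. le y z \<and> covers P le z p"
proof -
  define S where "S = {z\<in>P. le y z \<and> le z p \<and> z \<noteq> p}"
  have "y \<in> S" using assms prefl unfolding S_def by auto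
  then obtain z where zS: "z \<in> S" and zm: "\<forall>w\<in>S. h w \<le> h z"
    using ex_max_h[of S y] unfolding S_def by auto
  have nx: "\<not> (\<exists>w\<in>P. le z w \<and> le w p \<and> w \<noteq> z \<and> w \<noteq> p)"
  proof
    assume "\<exists>w\<in>P. le z w \<and> le w p \<and> w \<noteq> z \<and> w \<noteq> p"
    then obtain w where w: "w \<in> P" "le z w" "le w p" "w \<noteq> z" "w \<noteq> p" by auto
    have "w \<in> S" using w zS assms ptrans[of y z w] unfolding S_def by auto
    moreover have "h z < h w" using h_less[of z w] w zS unfolding S_def by auto
    ultimately show False using zm by fastforce
  qed
  have "covers P le z p"
    unfolding covers_def using nx zS assms unfolding S_def by auto
  then show ?thesis using zS unfolding S_def by auto
qed

lemma cover_above: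
  assumes "y \<in> P" "p \<in> P" "le p y" "y \<noteq> p"
  shows "\<exists>z\<in>P. le z y \<and> covers P le p z"
proof -
  define S where "S = {z\<in>P. le p z \<and> le z y \<and> z \<noteq> p}"
  have "y \<in> S" using assms prefl unfolding S_def by auto
  then obtain z where zS: "z \<in> S" and zm: "\<forall>w\<in>S. h z \<le> h w"
    using ex_min_h[of S y] unfolding S_def by auto
  have nx: "\<not> (\<exists>w\<in>P. le p w \<and> le w z \<and> w \<noteq> p \<and> w \<noteq> z)"
  proof
    assume "\<exists>w\<in>P. le p w \<and> le w z \<and> w \<noteq> p \<and> w \<noteq> z"
    then obtain w where w: "w \<in> P" "le p w" "le w z" "w \<noteq> p" "w \<noteq> z" by auto
    have "w \<in> S" using w zS assms ptrans[of w z y] unfolding S_def by auto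
    moreover have "h w < h z" using h_less[of w z] w zS unfolding S_def by auto
    ultimately show False using zm by fastforce
  qed
  have "covers P le p z"
    unfolding covers_def using nx zS assms unfolding S_def by auto
  then show ?thesis using zS unfolding S_def by auto
qed

lemma idealD: "J \<in> order_ideals P le \<Longrightarrow> J \<subseteq> P"
  "J \<in> order_ideals P le \<Longrightarrow> x \<in> J \<Longrightarrow> y \<in> P \<Longrightarrow> le y x \<Longrightarrow> y \<in> J"
  unfolding order_ideals_def by auto

lemma tplus_cov:
  assumes J: "J \<in> order_ideals P le" and p: "p \<in> P"
  shows "tplus P le p J = (if p \<notin> J \<and> (\<forall>y\<in>P. covers P le y p \<longrightarrow> y \<in> J) then 1 else 0)"
proof -
  have "(p \<notin> J \<and> p \<in> minimal_elts le (P - J)) \<longleftrightarrow> (p \<notin> J \<and> (\<forall>y\<in>P. covers P le y p \<longrightarrow> y \<in> J))"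
  proof
    assume a: "p \<notin> J \<and> p \<in> minimal_elts le (P - J)"
    show "p \<notin> J \<and> (\<forall>y\<in>P. covers P le y p \<longrightarrow> y \<in> J)"
      using a unfolding minimal_elts_def covers_def by auto
  next
    assume a: "p \<notin> J \<and> (\<forall>y\<in>P. covers P le y p \<longrightarrow> y \<in> J)"
    have "y = p" if "y \<in> P - J" "le y p" for y
    proof (rule ccontr)
      assume "y \<noteq> p"
      have yP: "y \<in> P" using that by auto
      obtain z where "z \<in> P" "le y z" "covers P le z p" using cover_below[OF yP p \<open>le y p\<close> \<open>y \<noteq> p\<close>] by auto
      then have "z \<in> J" using a by auto
      then have "y \<in> J" using idealD(2)[OF J] that \<open>le y z\<close> by auto
      then show False using that by auto
    qed
    then show "p \<notin> J \<and> p \<in> minimal_elts le (P - J)" using a p unfolding minimal_elts_def by auto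
  qed
  then show ?thesis unfolding tplus_def by simp
qed

lemma tminus_cov:
  assumes J: "J \<in> order_ideals P le" and p: "p \<in> P"
  shows "tminus le p J = (if p \<in> J \<and> (\<forall>y\<in>P. covers P le p y \<longrightarrow> y \<notin> J) then 1 else 0)"
proof -
  have "(p \<in> J \<and> p \<in> maximal_elts le J) \<longleftrightarrow> (p \<in> J \<and> (\<forall>y\<in>P. covers P le p y \<longrightarrow> y \<notin> J))"
  proof
    assume a: "p \<in> J \<and> p \<in> maximal_elts le J"
    show "p \<in> J \<and> (\<forall>y\<in>P. covers P le p y \<longrightarrow> y \<notin> J)"
      using a unfolding maximal_elts_def covers_def by auto
  next
    assume a: "p \<in> J \<and> (\<forall>y\<in>P. covers P le p y \<longrightarrow> y \<notin> J)"
    have "y = p" if "y \<in> J" "le p y" for y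
    proof (rule ccontr)
      assume "y \<noteq> p"
      have yP: "y \<in> P" using that idealD(1)[OF J] by auto
      obtain z where "z \<in> P" "le z y" "covers P le p z" using cover_above[OF yP p \<open>le p y\<close> \<open>y \<noteq> p\<close>] by auto
      then have "z \<notin> J" using a by auto
      then show False using idealD(2)[OF J] that \<open>le z y\<close> \<open>z \<in> P\<close> by auto
    qed
    then show "p \<in> J \<and> p \<in> maximal_elts le J" using a unfolding maximal_elts_def by auto
  qed
  then show ?thesis unfolding tminus_def by simp
qed

lemma toggle_mem:
  assumes "J \<in> order_ideals P le"
  shows "(q \<in> toggle P le x J) = (if q = x then ((x \<in> J) \<noteq> (tplus P le x J = 1 \<or> tminus le x J = 1)) else q \<in> J)"
  unfolding toggle_def tplus_def tminus_def by auto

lemma toggle_ideal: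
  assumes J: "J \<in> order_ideals P le" and x: "x \<in> P"
  shows "toggle P le x J \<in> order_ideals P le"
proof -
  have JP: "J \<subseteq> P" using idealD(1)[OF J] .
  consider (a) "x \<notin> J \<and> x \<in> minimal_elts le (P - J)"
    | (b) "\<not>(x \<notin> J \<and> x \<in> minimal_elts le (P - J))" "x \<in> J \<and> x \<in> maximal_elts le J"
    | (c) "\<not>(x \<notin> J \<and> x \<in> minimal_elts le (P - J))" "\<not>(x \<in> J \<and> x \<in> maximal_elts le J)" by blast
  then show ?thesis
  proof cases
    case a
    then have t: "toggle P le x J = insert x J" unfolding toggle_def by simp
    show ?thesis unfolding t order_ideals_def
    proof (intro CollectI conjI ballI impI)
      show "insert x J \<subseteq> P" using JP x by auto
      fix z w assume z: "z \<in> insert x J" and w: "w \<in> P" "le w z"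
      show "w \<in> insert x J"
      proof (cases "z = x")
        case True then show ?thesis using a w unfolding minimal_elts_def by auto
      next
        case False then show ?thesis using z w idealD(2)[OF J] by auto
      qed
    qed
  next
    case b
    then have t: "toggle P le x J = J - {x}" unfolding toggle_def by simp
    show ?thesis unfolding t order_ideals_def
    proof (intro CollectI conjI ballI impI)
      show "J - {x} \<subseteq> P" using JP by auto
      fix z w assume z: "z \<in> J - {x}" and w: "w \<in> P" "le w z"
      have "w \<in> J" using z w idealD(2)[OF J] by auto
      moreover have "w \<noteq> x" using b z w unfolding maximal_elts_def by auto
      ultimately show "w \<in> J - {x}" by auto
    qed
  next
    case c
    then have t: "toggle P le x J = J" unfolding toggle_def by auto
    show ?thesis unfolding t using J .
  qed
qed

lemma toggle_invol:
  assumes J: "J \<in> order_ideals P le" and x: "x \<in> P"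
  shows "toggle P le x (toggle P le x J) = J"
proof -
  have JP: "J \<subseteq> P" using idealD(1)[OF J] .
  consider (a) "x \<notin> J \<and> x \<in> minimal_elts le (P - J)"
    | (b) "\<not>(x \<notin> J \<and> x \<in> minimal_elts le (P - J))" "x \<in> J \<and> x \<in> maximal_elts le J"
    | (c) "\<not>(x \<notin> J \<and> x \<in> minimal_elts le (P - J))" "\<not>(x \<in> J \<and> x \<in> maximal_elts le J)" by blast
  then show ?thesis
  proof cases
    case a
    then have t: "toggle P le x J = insert x J" unfolding toggle_def by simp
    have "x \<in> maximal_elts le (insert x J)"
      using a idealD(2)[OF J] x unfolding maximal_elts_def by auto
    then show ?thesis unfolding t using a by (auto simp: toggle_def)
  next
    case b
    then have t: "toggle P le x J = J - {x}" unfolding toggle_def by simp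
    have "x \<in> minimal_elts le (P - (J - {x}))"
      using b idealD(2)[OF J] x unfolding minimal_elts_def by auto
    then show ?thesis unfolding t using b by (auto simp: toggle_def)
  next
    case c
    then have t: "toggle P le x J = J" unfolding toggle_def by auto
    show ?thesis by (simp add: t)
  qed
qed

lemma tplus_local:
  assumes "q \<in> P" "\<forall>y\<in>P. le y q \<longrightarrow> (y \<in> J \<longleftrightarrow> y \<in> J')"
  shows "tplus P le q J = tplus P le q J'"
proof -
  have "q \<in> J \<longleftrightarrow> q \<in> J'" using assms prefl by auto
  then show ?thesis using assms unfolding tplus_def minimal_elts_def by auto
qed

lemma tminus_local:
  assumes "q \<in> P" "J \<subseteq> P" "J' \<subseteq> P" "\<forall>y\<in>P. le q y \<longrightarrow> (y \<in> J \<longleftrightarrow> y \<in> J')"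
  shows "tminus le q J = tminus le q J'"
proof -
  have "q \<in> J \<longleftrightarrow> q \<in> J'" using assms prefl by auto
  moreover have "(\<forall>y\<in>J. le q y \<longrightarrow> y = q) \<longleftrightarrow> (\<forall>y\<in>J'. le q y \<longrightarrow> y = q)"
    using assms by blast
  ultimately show ?thesis unfolding tminus_def maximal_elts_def by simp
qed

end

context fposet
begin

lemma fin_ideals: "finite (order_ideals P le)"
proof -
  have "order_ideals P le \<subseteq> Pow P" unfolding order_ideals_def by auto
  then show ?thesis using finP finite_subset by blast
qed

lemma row_ideal:
  assumes "J \<in> order_ideals P le"
  shows "rowmotion P le J \<in> order_ideals P le"
proof -
  let ?R = "rowmotion P le J"
  have sub: "?R \<subseteq> P" unfolding rowmotion_def by auto
  have dc: "y \<in> ?R" if x: "x \<in> ?R" and y: "y \<in> P" "le y x" for x y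
  proof -
    obtain z where z: "z \<in> minimal_elts le (P - J)" "le x z" "x \<in> P"
      using x unfolding rowmotion_def by auto
    have "z \<in> P" using z unfolding minimal_elts_def by auto
    then have "le y z" using ptrans[of y x z] y z by auto
    then show ?thesis using y z unfolding rowmotion_def by auto
  qed
  show ?thesis unfolding order_ideals_def using sub dc by blast
qed

lemma max_row: "maximal_elts le (rowmotion P le J) = minimal_elts le (P - J)"
proof
  show "maximal_elts le (rowmotion P le J) \<subseteq> minimal_elts le (P - J)"
  proof
    fix x assume x: "x \<in> maximal_elts le (rowmotion P le J)"
    then obtain y where y: "y \<in> minimal_elts le (P - J)" "le x y" "x \<in> P"
      unfolding maximal_elts_def rowmotion_def by auto
    have yP: "y \<in> P" using y unfolding minimal_elts_def by auto
    have "y \<in> rowmotion P le J" using y yP prefl unfolding rowmotion_def by auto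
    then have "y = x" using x y unfolding maximal_elts_def by auto
    then show "x \<in> minimal_elts le (P - J)" using y by simp
  qed
next
  show "minimal_elts le (P - J) \<subseteq> maximal_elts le (rowmotion P le J)"
  proof
    fix a assume a: "a \<in> minimal_elts le (P - J)"
    have aP: "a \<in> P" using a unfolding minimal_elts_def by auto
    have aR: "a \<in> rowmotion P le J" using a aP prefl unfolding rowmotion_def by auto
    have "y = a" if yy: "y \<in> rowmotion P le J" "le a y" for y
    proof -
      obtain b where b: "b \<in> minimal_elts le (P - J)" "le y b" "y \<in> P"
        using yy unfolding rowmotion_def by auto
      have bP: "b \<in> P" using b unfolding minimal_elts_def by auto
      have "le a b" using ptrans[of a y b] aP bP b yy by auto
      then have "a = b" using a b unfolding minimal_elts_def by auto
      then show "y = a" using pantisym[of y a] b yy aP by auto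
    qed
    then show "a \<in> maximal_elts le (rowmotion P le J)" using aR unfolding maximal_elts_def by auto
  qed
qed

lemma tplus_row: "tplus P le p J = tminus le p (rowmotion P le J)"
proof -
  have "(p \<notin> J \<and> p \<in> minimal_elts le (P - J)) \<longleftrightarrow> p \<in> minimal_elts le (P - J)"
    unfolding minimal_elts_def by auto
  moreover have "(p \<in> rowmotion P le J \<and> p \<in> maximal_elts le (rowmotion P le J))
     \<longleftrightarrow> p \<in> maximal_elts le (rowmotion P le J)"
    unfolding maximal_elts_def by auto
  ultimately show ?thesis unfolding tplus_def tminus_def max_row by simp
qed

lemma ideal_compl:
  assumes J: "J \<in> order_ideals P le"
  shows "J = P - {x\<in>P. \<exists>a\<in>minimal_elts le (P - J). le a x}"
proof -
  have A: "x \<in> J" if "x \<in> P" "\<not> (\<exists>a\<in>minimal_elts le (P - J). le a x)" for x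
  proof (rule ccontr)
    assume "x \<notin> J"
    define S where "S = {a \<in> P - J. le a x}"
    have "x \<in> S" using that \<open>x \<notin> J\<close> prefl unfolding S_def by auto
    then obtain a where aS: "a \<in> S" and am: "\<forall>w\<in>S. h a \<le> h w"
      using ex_min_h[of S x] unfolding S_def by auto
    have "a \<in> minimal_elts le (P - J)"
      unfolding minimal_elts_def
    proof (intro CollectI conjI ballI impI)
      show "a \<in> P - J" using aS unfolding S_def by auto
      fix z assume z: "z \<in> P - J" "le z a"
      show "z = a"
      proof (rule ccontr)
        assume "z \<noteq> a"
        have "z \<in> S" using z aS ptrans[of z a x] that unfolding S_def by auto
        moreover have "h z < h a" using h_less[of z a] z aS \<open>z \<noteq> a\<close> unfolding S_def by auto
        ultimately show False using am by fastforce
      qed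
    qed
    then show False using that aS unfolding S_def by auto
  qed
  moreover have B: "\<not> (\<exists>a\<in>minimal_elts le (P - J). le a x)" if "x \<in> J" for x
  proof
    assume "\<exists>a\<in>minimal_elts le (P - J). le a x"
    then obtain a where "a \<in> minimal_elts le (P - J)" "le a x" by auto
    then show False using idealD(2)[OF J that] unfolding minimal_elts_def by auto
  qed
  show ?thesis
  proof (intro set_eqI iffI)
    fix x assume "x \<in> J" then show "x \<in> P - {x\<in>P. \<exists>a\<in>minimal_elts le (P - J). le a x}"
      using B idealD(1)[OF J] by blast
  next
    fix x assume "x \<in> P - {x\<in>P. \<exists>a\<in>minimal_elts le (P - J). le a x}"
    then show "x \<in> J" using A by blast
  qed
qed

lemma row_inj: "inj_on (rowmotion P le) (order_ideals P le)"
proof (rule inj_onI)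
  fix J K assume J: "J \<in> order_ideals P le" and K: "K \<in> order_ideals P le"
    and e: "rowmotion P le J = rowmotion P le K"
  have "minimal_elts le (P - J) = minimal_elts le (P - K)"
    using e max_row by metis
  then show "J = K" using ideal_compl[OF J] ideal_compl[OF K] by simp
qed

lemma expect_orbit:
  assumes "Ob \<subseteq> order_ideals P le"
  shows "expect P le (\<lambda>K. if K \<in> Ob then 1 / real (card Ob) else 0) g = (\<Sum>K\<in>Ob. g K) / real (card Ob)"
proof -
  have "expect P le (\<lambda>K. if K \<in> Ob then 1 / real (card Ob) else 0) g
      = (\<Sum>K\<in>order_ideals P le. if K \<in> Ob then g K / real (card Ob) else 0)"
    unfolding expect_def by (intro sum.cong) auto
  also have "\<dots> = (\<Sum>K\<in>order_ideals P le \<inter> Ob. g K / real (card Ob))"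
    using fin_ideals by (simp add: sum.inter_restrict)
  also have "order_ideals P le \<inter> Ob = Ob" using assms by auto
  finally show ?thesis by (simp add: sum_divide_distrib)
qed

lemma orbit_avg_c:
  assumes tc: "tCDE P le"
    and fmap: "\<And>J. J \<in> order_ideals P le \<Longrightarrow> f J \<in> order_ideals P le"
    and finj: "inj_on f (order_ideals P le)"
    and sym: "\<And>Ob p. Ob \<subseteq> order_ideals P le \<Longrightarrow> f ` Ob = Ob \<Longrightarrow> p \<in> P \<Longrightarrow>
        (\<Sum>K\<in>Ob. tplus P le p K) = (\<Sum>K\<in>Ob. tminus le p K)"
    and I: "I \<in> order_ideals P le"
  shows "orbit_avg f (\<lambda>K. real (ddeg le K)) I = expect P le (uniform P le) (\<lambda>K. real (ddeg le K))"
proof -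
  define Ob where "Ob = orbit_of f I"
  have sub: "(f ^^ k) I \<in> order_ideals P le" for k
    by (induction k) (auto simp: I fmap)
  have Osub: "Ob \<subseteq> order_ideals P le" unfolding Ob_def orbit_of_def using sub by auto
  have fO: "finite Ob" using Osub fin_ideals finite_subset by auto
  have IO: "I \<in> Ob" unfolding Ob_def orbit_of_def by (auto intro!: exI[of _ 0])
  have "f ` Ob \<subseteq> Ob"
  proof
    fix x assume "x \<in> f ` Ob"
    then obtain k where "x = f ((f ^^ k) I)" unfolding Ob_def orbit_of_def by auto
    then have "x = (f ^^ Suc k) I" by simp
    then show "x \<in> Ob" unfolding Ob_def orbit_of_def by blast
  qed
  then have fOO: "f ` Ob = Ob" using endo_inj_surj[OF fO] inj_on_subset[OF finj Osub] by auto
  have cpos: "card Ob > 0" using fO IO card_gt_0_iff by auto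
  define \<mu> where "\<mu> = (\<lambda>K. if K \<in> Ob then 1 / real (card Ob) else 0)"
  have dist: "is_distribution P le \<mu>"
    unfolding is_distribution_def
  proof
    show "\<forall>I\<in>order_ideals P le. 0 \<le> \<mu> I" unfolding \<mu>_def by auto
    have "(\<Sum>I\<in>order_ideals P le. \<mu> I) = expect P le \<mu> (\<lambda>_. 1)" unfolding expect_def by simp
    also have "\<dots> = 1" unfolding \<mu>_def expect_orbit[OF Osub] using cpos by simp
    finally show "(\<Sum>I\<in>order_ideals P le. \<mu> I) = 1" .
  qed
  have ts: "toggle_symmetric P le \<mu>"
    unfolding toggle_symmetric_def \<mu>_def expect_orbit[OF Osub] using sym[OF Osub fOO] by simp
  have "expect P le \<mu> (\<lambda>K. real (ddeg le K)) = expect P le (uniform P le) (\<lambda>K. real (ddeg le K))"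
    using tc dist ts unfolding tCDE_def by blast
  moreover have "expect P le \<mu> (\<lambda>K. real (ddeg le K)) = orbit_avg f (\<lambda>K. real (ddeg le K)) I"
    unfolding \<mu>_def expect_orbit[OF Osub] orbit_avg_def Ob_def[symmetric] by simp
  ultimately show ?thesis by simp
qed

lemma row_part:
  assumes "tCDE P le" "I \<in> order_ideals P le"
  shows "orbit_avg (rowmotion P le) (\<lambda>K. real (ddeg le K)) I = expect P le (uniform P le) (\<lambda>K. real (ddeg le K))"
proof (rule orbit_avg_c[OF assms(1) row_ideal row_inj _ assms(2)])
  fix Ob p assume Osub: "Ob \<subseteq> order_ideals P le" and fO: "rowmotion P le ` Ob = Ob"
  have inj: "inj_on (rowmotion P le) Ob" using inj_on_subset[OF row_inj Osub] .
  have "(\<Sum>K\<in>Ob. tplus P le p K) = (\<Sum>K\<in>Ob. tminus le p (rowmotion P le K))"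
    by (simp add: tplus_row)
  also have "\<dots> = (\<Sum>K\<in>rowmotion P le ` Ob. tminus le p K)"
    using sum.reindex[OF inj, of "tminus le p"] by simp
  also have "\<dots> = (\<Sum>K\<in>Ob. tminus le p K)" using fO by simp
  finally show "(\<Sum>K\<in>Ob. tplus P le p K) = (\<Sum>K\<in>Ob. tminus le p K)" .
qed

end

locale ranked = fposet +
  fixes rk :: "'a \<Rightarrow> nat"
  assumes rkf: "is_rank_function P le rk"
begin

lemma rk_cover: assumes "covers P le x y" shows "rk y = rk x + 1"
proof -
  have "x \<in> P" "y \<in> P" using assms unfolding covers_def by auto
  then show ?thesis using rkf assms unfolding is_rank_function_def by blast
qed

lemma rk_less: "x \<in> P \<Longrightarrow> y \<in> P \<Longrightarrow> le x y \<Longrightarrow> x \<noteq> y \<Longrightarrow> rk x < rk y"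
proof (induction "h y" arbitrary: y rule: less_induct)
  case less
  obtain z where z: "z \<in> P" "le x z" "covers P le z y"
    using cover_below[OF less.prems(1,2,3,4)] by auto
  have ry: "rk y = rk z + 1" using rk_cover z(3) .
  show ?case
  proof (cases "x = z")
    case True then show ?thesis using ry by simp
  next
    case False
    have "le z y" "z \<noteq> y" using z(3) unfolding covers_def by auto
    then have "h z < h y" using h_less z(1) less.prems(2) by auto
    then have "rk x < rk z" using less.hyps[of z] less.prems(1) z(1,2) False by auto
    then show ?thesis using ry by simp
  qed
qed

lemma same_rank_incomp: "x \<in> P \<Longrightarrow> q \<in> P \<Longrightarrow> x \<noteq> q \<Longrightarrow> rk x = rk q \<Longrightarrow> \<not> le x q"
  using rk_less by fastforce

lemma fold_toggle:
  assumes "distinct xs" "set xs \<subseteq> P" "\<forall>a\<in>set xs. \<forall>b\<in>set xs. a \<noteq> b \<longrightarrow> \<not> le a b"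
    "J \<in> order_ideals P le"
  shows "fold (toggle P le) xs J \<in> order_ideals P le \<and>
    (\<forall>q. q \<notin> set xs \<longrightarrow> (q \<in> fold (toggle P le) xs J \<longleftrightarrow> q \<in> J)) \<and>
    (\<forall>q\<in>set xs. (q \<in> fold (toggle P le) xs J \<longleftrightarrow> ((q \<in> J) \<noteq> (tplus P le q J = 1 \<or> tminus le q J = 1))))"
  using assms
proof (induction xs arbitrary: J)
  case Nil
  then show ?case by simp
next
  case (Cons x xs)
  define J' where "J' = toggle P le x J"
  have xP: "x \<in> P" using Cons.prems by auto
  have J'i: "J' \<in> order_ideals P le" unfolding J'_def using toggle_ideal[OF Cons.prems(4) xP] .
  have IH: "fold (toggle P le) xs J' \<in> order_ideals P le \<and>
    (\<forall>q. q \<notin> set xs \<longrightarrow> (q \<in> fold (toggle P le) xs J' \<longleftrightarrow> q \<in> J')) \<and>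
    (\<forall>q\<in>set xs. (q \<in> fold (toggle P le) xs J' \<longleftrightarrow> ((q \<in> J') \<noteq> (tplus P le q J' = 1 \<or> tminus le q J' = 1))))"
    using Cons.IH[OF _ _ _ J'i] Cons.prems by auto
  have memJ': "q \<in> J' \<longleftrightarrow> (if q = x then ((x \<in> J) \<noteq> (tplus P le x J = 1 \<or> tminus le x J = 1)) else q \<in> J)" for q
    unfolding J'_def using toggle_mem[OF Cons.prems(4)] .
  have eqF: "fold (toggle P le) (x # xs) J = fold (toggle P le) xs J'" unfolding J'_def by simp
  have JP: "J \<subseteq> P" "J' \<subseteq> P" using idealD(1) Cons.prems(4) J'i by auto
  have loc: "tplus P le q J' = tplus P le q J \<and> tminus le q J' = tminus le q J" if q: "q \<in> set xs" for q
  proof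
    have qx: "q \<noteq> x" using q Cons.prems(1) by auto
    have qP: "q \<in> P" using q Cons.prems(2) by auto
    have n1: "\<not> le x q" "\<not> le q x" using Cons.prems(3) q qx by auto
    show "tplus P le q J' = tplus P le q J"
      by (rule tplus_local[OF qP]) (use memJ' n1 in auto)
    show "tminus le q J' = tminus le q J"
      by (rule tminus_local[OF qP JP(2) JP(1)]) (use memJ' n1 in auto)
  qed
  show ?case
    unfolding eqF
  proof (intro conjI allI impI ballI)
    show "fold (toggle P le) xs J' \<in> order_ideals P le" using IH by auto
  next
    fix q assume "q \<notin> set (x # xs)"
    then show "(q \<in> fold (toggle P le) xs J') = (q \<in> J)" using IH memJ'[of q] by auto
  next
    fix q assume q: "q \<in> set (x # xs)"
    show "(q \<in> fold (toggle P le) xs J') = ((q \<in> J) \<noteq> (tplus P le q J = 1 \<or> tminus le q J = 1))"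
    proof (cases "q = x")
      case True
      then have "q \<notin> set xs" using Cons.prems(1) by auto
      then show ?thesis using IH memJ'[of q] True by auto
    next
      case False
      then have "q \<in> set xs" using q by auto
      then show ?thesis using IH memJ'[of q] loc[of q] False by auto
    qed
  qed
qed

lemma fold_toggle_ideal: "set xs \<subseteq> P \<Longrightarrow> J \<in> order_ideals P le \<Longrightarrow> fold (toggle P le) xs J \<in> order_ideals P le"
  by (induction xs arbitrary: J) (auto simp: toggle_ideal)

lemma fold_toggle_inj: "set xs \<subseteq> P \<Longrightarrow> inj_on (fold (toggle P le) xs) (order_ideals P le)"
proof (induction xs)
  case Nil then show ?case by simp
next
  case (Cons x xs)
  show ?case
  proof (rule inj_onI)
    fix A B assume A: "A \<in> order_ideals P le" and B: "B \<in> order_ideals P le"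
      and e: "fold (toggle P le) (x # xs) A = fold (toggle P le) (x # xs) B"
    have xP: "x \<in> P" using Cons.prems by auto
    have "toggle P le x A = toggle P le x B"
      using e Cons.IH Cons.prems toggle_ideal[OF A xP] toggle_ideal[OF B xP] unfolding inj_on_def by auto
    then show "A = B" using toggle_invol[OF A xP] toggle_invol[OF B xP] by metis
  qed
qed

definition RL where "RL j = (SOME xs. distinct xs \<and> set xs = {p\<in>P. rk p = j})"

lemma RL: "distinct (RL j) \<and> set (RL j) = {p\<in>P. rk p = j}"
proof -
  have "\<exists>xs. distinct xs \<and> set xs = {p\<in>P. rk p = j}"
    using finite_distinct_list[of "{p\<in>P. rk p = j}"] finP by auto
  then show ?thesis unfolding RL_def by (rule someI_ex)
qed

lemma rt_eq: "rank_toggle P le rk j = fold (toggle P le) (RL j)"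
  unfolding rank_toggle_def RL_def by simp

lemma rt_props:
  assumes J: "J \<in> order_ideals P le"
  shows "rank_toggle P le rk j J \<in> order_ideals P le"
    "rk q \<noteq> j \<Longrightarrow> (q \<in> rank_toggle P le rk j J \<longleftrightarrow> q \<in> J)"
    "q \<in> P \<Longrightarrow> rk q = j \<Longrightarrow> (q \<in> rank_toggle P le rk j J \<longleftrightarrow> ((q \<in> J) \<noteq> (tplus P le q J = 1 \<or> tminus le q J = 1)))"
proof -
  have inc: "\<forall>a\<in>set (RL j). \<forall>b\<in>set (RL j). a \<noteq> b \<longrightarrow> \<not> le a b"
    using RL same_rank_incomp by auto
  note F = fold_toggle[OF conjunct1[OF RL] _ inc J]
  have sP: "set (RL j) \<subseteq> P" using RL by auto
  show "rank_toggle P le rk j J \<in> order_ideals P le" using F sP rt_eq by auto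
  show "rk q \<noteq> j \<Longrightarrow> (q \<in> rank_toggle P le rk j J \<longleftrightarrow> q \<in> J)" using F sP rt_eq RL by auto
  show "q \<in> P \<Longrightarrow> rk q = j \<Longrightarrow> (q \<in> rank_toggle P le rk j J \<longleftrightarrow> ((q \<in> J) \<noteq> (tplus P le q J = 1 \<or> tminus le q J = 1)))"
    using F sP rt_eq RL by auto
qed

lemma rt_inj: "inj_on (rank_toggle P le rk j) (order_ideals P le)"
  unfolding rt_eq using fold_toggle_inj RL by auto

definition Fs where "Fs L J = foldr (rank_toggle P le rk) L J"

lemma Fs_ideal: "J \<in> order_ideals P le \<Longrightarrow> Fs L J \<in> order_ideals P le"
  unfolding Fs_def by (induction L) (auto simp: rt_props(1))

lemma Fs_inj: "inj_on (Fs L) (order_ideals P le)"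
proof (induction L)
  case Nil then show ?case unfolding Fs_def by simp
next
  case (Cons j L)
  show ?case
  proof (rule inj_onI)
    fix A B assume A: "A \<in> order_ideals P le" and B: "B \<in> order_ideals P le"
      and e: "Fs (j # L) A = Fs (j # L) B"
    have "rank_toggle P le rk j (Fs L A) = rank_toggle P le rk j (Fs L B)"
      using e unfolding Fs_def by simp
    then have "Fs L A = Fs L B" using rt_inj Fs_ideal[OF A] Fs_ideal[OF B] unfolding inj_on_def by blast
    then show "A = B" using Cons.IH A B unfolding inj_on_def by blast
  qed
qed

lemma Fs_other: "J \<in> order_ideals P le \<Longrightarrow> rk q \<notin> set L \<Longrightarrow> (q \<in> Fs L J \<longleftrightarrow> q \<in> J)"
proof (induction L)
  case Nil then show ?case unfolding Fs_def by simp
next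
  case (Cons j L)
  have "q \<in> Fs (j # L) J \<longleftrightarrow> q \<in> Fs L J"
    using rt_props(2)[OF Fs_ideal[OF Cons.prems(1), of L], where j=j and q=q] Cons.prems
    unfolding Fs_def by simp
  then show ?case using Cons by simp
qed

lemma tplus_Fs:
  assumes J: "J \<in> order_ideals P le" and p: "p \<in> P" and "rk p \<notin> set L" "rk p - 1 \<notin> set L"
  shows "tplus P le p (Fs L J) = tplus P le p J"
proof -
  have "rk y \<notin> set L" if "covers P le y p" for y using rk_cover[OF that] assms by auto
  then have "(\<forall>y\<in>P. covers P le y p \<longrightarrow> y \<in> Fs L J) \<longleftrightarrow> (\<forall>y\<in>P. covers P le y p \<longrightarrow> y \<in> J)"
    using Fs_other[OF J] by auto
  moreover have "p \<in> Fs L J \<longleftrightarrow> p \<in> J" using Fs_other[OF J] assms by auto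
  ultimately show ?thesis unfolding tplus_cov[OF J p] tplus_cov[OF Fs_ideal[OF J] p] by simp
qed

lemma tminus_Fs:
  assumes J: "J \<in> order_ideals P le" and p: "p \<in> P" and "rk p \<notin> set L" "rk p + 1 \<notin> set L"
  shows "tminus le p (Fs L J) = tminus le p J"
proof -
  have "rk y \<notin> set L" if "covers P le p y" for y using rk_cover[OF that] assms by auto
  then have "(\<forall>y\<in>P. covers P le p y \<longrightarrow> y \<notin> Fs L J) \<longleftrightarrow> (\<forall>y\<in>P. covers P le p y \<longrightarrow> y \<notin> J)"
    using Fs_other[OF J] by auto
  moreover have "p \<in> Fs L J \<longleftrightarrow> p \<in> J" using Fs_other[OF J] assms by auto
  ultimately show ?thesis unfolding tminus_cov[OF J p] tminus_cov[OF Fs_ideal[OF J] p] by simp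
qed

lemma swap:
  assumes J: "J \<in> order_ideals P le" and p: "p \<in> P" and j: "rk p = j"
  shows "tplus P le p (rank_toggle P le rk j J) = tminus le p J"
    "tminus le p (rank_toggle P le rk j J) = tplus P le p J"
proof -
  define J' where "J' = rank_toggle P le rk j J"
  have J'i: "J' \<in> order_ideals P le" unfolding J'_def using rt_props(1)[OF J] .
  have c1: "(\<forall>y\<in>P. covers P le y p \<longrightarrow> y \<in> J') \<longleftrightarrow> (\<forall>y\<in>P. covers P le y p \<longrightarrow> y \<in> J)"
    using rt_props(2)[OF J] rk_cover j unfolding J'_def by force
  have c2: "(\<forall>y\<in>P. covers P le p y \<longrightarrow> y \<notin> J') \<longleftrightarrow> (\<forall>y\<in>P. covers P le p y \<longrightarrow> y \<notin> J)"
    using rt_props(2)[OF J] rk_cover j unfolding J'_def by force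
  define A where "A = (\<forall>y\<in>P. covers P le y p \<longrightarrow> y \<in> J)"
  define B where "B = (\<forall>y\<in>P. covers P le p y \<longrightarrow> y \<notin> J)"
  have hA: "p \<in> J \<Longrightarrow> A"
    using idealD(2)[OF J] unfolding covers_def A_def by auto
  have hB: "p \<notin> J \<Longrightarrow> B"
    using idealD(2)[OF J] p unfolding covers_def B_def by auto
  have tpJ: "tplus P le p J = (if p \<notin> J \<and> A then 1 else 0)" unfolding A_def by (rule tplus_cov[OF J p])
  have tmJ: "tminus le p J = (if p \<in> J \<and> B then 1 else 0)" unfolding B_def by (rule tminus_cov[OF J p])
  have tpJ': "tplus P le p J' = (if p \<notin> J' \<and> A then 1 else 0)" unfolding A_def c1[symmetric] by (rule tplus_cov[OF J'i p])
  have tmJ': "tminus le p J' = (if p \<in> J' \<and> B then 1 else 0)" unfolding B_def c2[symmetric] by (rule tminus_cov[OF J'i p])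
  have m: "p \<in> J' \<longleftrightarrow> ((p \<in> J) \<noteq> (tplus P le p J = 1 \<or> tminus le p J = 1))"
    unfolding J'_def using rt_props(3)[OF J p j] .
  have "tplus P le p J' = tminus le p J \<and> tminus le p J' = tplus P le p J"
  proof (cases "p \<in> J")
    case True
    then have a: A using hA by simp
    have "p \<in> J' \<longleftrightarrow> \<not> B" using m True unfolding tpJ tmJ by simp
    then show ?thesis unfolding tpJ tmJ tpJ' tmJ' using True a by simp
  next
    case False
    then have b: B using hB by simp
    have "p \<in> J' \<longleftrightarrow> A" using m False unfolding tpJ tmJ by simp
    then show ?thesis unfolding tpJ tmJ tpJ' tmJ' using False b by simp
  qed
  then show "tplus P le p (rank_toggle P le rk j J) = tminus le p J"
    "tminus le p (rank_toggle P le rk j J) = tplus P le p J" unfolding J'_def by auto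
qed

end

context ranked
begin

lemma Fs_sym:
  assumes dist: "distinct ts" and p: "p \<in> P" and pin: "rk p \<in> set ts"
    and Osub: "Ob \<subseteq> order_ideals P le" and fO: "Fs ts ` Ob = Ob"
  shows "(\<Sum>K\<in>Ob. tplus P le p K) = (\<Sum>K\<in>Ob. tminus le p K)"
proof -
  obtain A B where ts: "ts = A @ rk p # B" using split_list[OF pin] by auto
  have iA: "rk p \<notin> set A" and iB: "rk p \<notin> set B" and AB: "set A \<inter> set B = {}"
    using dist ts by auto
  define bef where "bef K = Fs B K" for K
  define aft where "aft K = rank_toggle P le rk (rk p) (bef K)" for K
  have Phi: "Fs ts K = Fs A (aft K)" for K unfolding ts Fs_def aft_def bef_def by simp
  have inj: "inj_on (Fs ts) Ob" using inj_on_subset[OF Fs_inj Osub] .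
  have reidx: "(\<Sum>K\<in>Ob. g (Fs ts K)) = (\<Sum>K\<in>Ob. g K)" for g :: "'a set \<Rightarrow> real"
    using sum.reindex[OF inj, of g] fO by simp
  have befI: "bef K \<in> order_ideals P le" if "K \<in> Ob" for K
    using that Osub Fs_ideal unfolding bef_def by auto
  have aftI: "aft K \<in> order_ideals P le" if "K \<in> Ob" for K
    unfolding aft_def using rt_props(1)[OF befI[OF that]] .
  have sw1: "tplus P le p (aft K) = tminus le p (bef K)" if "K \<in> Ob" for K
    unfolding aft_def using swap(1)[OF befI[OF that] p refl] .
  have sw2: "tminus le p (aft K) = tplus P le p (bef K)" if "K \<in> Ob" for K
    unfolding aft_def using swap(2)[OF befI[OF that] p refl] .
  have ind: "(if p \<in> Fs ts K then 1 else 0::real)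
      = (if p \<in> K then 1 else 0) + tplus P le p (bef K) - tminus le p (bef K)" if K: "K \<in> Ob" for K
  proof -
    have KI: "K \<in> order_ideals P le" using K Osub by auto
    have e1: "p \<in> Fs ts K \<longleftrightarrow> p \<in> aft K" unfolding Phi using Fs_other[OF aftI[OF K] iA] .
    have e2: "p \<in> bef K \<longleftrightarrow> p \<in> K" unfolding bef_def using Fs_other[OF KI iB] .
    have e3: "p \<in> aft K \<longleftrightarrow> ((p \<in> bef K) \<noteq> (tplus P le p (bef K) = 1 \<or> tminus le p (bef K) = 1))"
      unfolding aft_def using rt_props(3)[OF befI[OF K] p refl] .
    have v1: "tplus P le p (bef K) = 0 \<or> (tplus P le p (bef K) = 1 \<and> p \<notin> bef K)"
      unfolding tplus_def by auto
    have v2: "tminus le p (bef K) = 0 \<or> (tminus le p (bef K) = 1 \<and> p \<in> bef K)"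
      unfolding tminus_def by auto
    show ?thesis unfolding e1 e3 using v1 v2 e2 by auto
  qed
  have tel: "(\<Sum>K\<in>Ob. tplus P le p (bef K)) = (\<Sum>K\<in>Ob. tminus le p (bef K))"
  proof -
    have "(\<Sum>K\<in>Ob. (if p \<in> K then 1 else 0::real)) = (\<Sum>K\<in>Ob. (if p \<in> Fs ts K then 1 else 0::real))"
      using reidx[of "\<lambda>K. if p \<in> K then 1 else 0"] by simp
    also have "\<dots> = (\<Sum>K\<in>Ob. (if p \<in> K then 1 else 0) + tplus P le p (bef K) - tminus le p (bef K))"
      using ind by (intro sum.cong) auto
    also have "\<dots> = (\<Sum>K\<in>Ob. (if p \<in> K then 1 else 0::real)) + (\<Sum>K\<in>Ob. tplus P le p (bef K))
        - (\<Sum>K\<in>Ob. tminus le p (bef K))"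
      by (simp add: sum.distrib sum_subtractf)
    finally show ?thesis by simp
  qed
  have Xp: "(\<Sum>K\<in>Ob. tplus P le p K) = (\<Sum>K\<in>Ob. tplus P le p (bef K))"
  proof (cases "rk p - 1 \<in> set B")
    case False
    show ?thesis
      using tplus_Fs[OF _ p iB False] Osub unfolding bef_def by (intro sum.cong) auto
  next
    case True
    then have nA: "rk p - 1 \<notin> set A" using AB by auto
    have "(\<Sum>K\<in>Ob. tplus P le p K) = (\<Sum>K\<in>Ob. tplus P le p (Fs ts K))" using reidx by simp
    also have "\<dots> = (\<Sum>K\<in>Ob. tplus P le p (aft K))"
      unfolding Phi using tplus_Fs[OF aftI p iA nA] by (intro sum.cong) auto
    also have "\<dots> = (\<Sum>K\<in>Ob. tminus le p (bef K))" using sw1 by (intro sum.cong) auto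
    finally show ?thesis using tel by simp
  qed
  have Xm: "(\<Sum>K\<in>Ob. tminus le p K) = (\<Sum>K\<in>Ob. tminus le p (bef K))"
  proof (cases "rk p + 1 \<in> set B")
    case False
    show ?thesis
      using tminus_Fs[OF _ p iB False] Osub unfolding bef_def by (intro sum.cong) auto
  next
    case True
    then have nA: "rk p + 1 \<notin> set A" using AB by auto
    have "(\<Sum>K\<in>Ob. tminus le p K) = (\<Sum>K\<in>Ob. tminus le p (Fs ts K))" using reidx by simp
    also have "\<dots> = (\<Sum>K\<in>Ob. tminus le p (aft K))"
      unfolding Phi using tminus_Fs[OF aftI p iA nA] by (intro sum.cong) auto
    also have "\<dots> = (\<Sum>K\<in>Ob. tplus P le p (bef K))" using sw2 by (intro sum.cong) auto
    finally show ?thesis using tel by simp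
  qed
  show ?thesis using Xp Xm tel by simp
qed

end

theorem corollary8p7:
  fixes P :: "'a set" and le :: "'a \<Rightarrow> 'a \<Rightarrow> bool"
  assumes "finite P" and "is_poset P le" and "poset_connected P le"
    and "tCDE P le"
  defines "c \<equiv> expect P le (uniform P le) (\<lambda>I. real (ddeg le I))"
  shows "(\<forall>I\<in>order_ideals P le.
            orbit_avg (rowmotion P le) (\<lambda>K. real (ddeg le K)) I = c)
       \<and> (\<forall>rk \<sigma>. is_rank_function P le rk \<longrightarrow>
            bij_betw \<sigma> {0..Max (rk ` P)} {0..Max (rk ` P)} \<longrightarrow>
            (\<forall>I\<in>order_ideals P le.
               orbit_avg (row_sigma P le rk (Max (rk ` P)) \<sigma>) (\<lambda>K. real (ddeg le K)) I = c))"
proof -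
  interpret fposet P le using assms(1,2) by unfold_locales
  have part1: "\<forall>I\<in>order_ideals P le. orbit_avg (rowmotion P le) (\<lambda>K. real (ddeg le K)) I = c"
    using row_part[OF assms(4)] unfolding c_def by auto
  have part2: "\<forall>rk \<sigma>. is_rank_function P le rk \<longrightarrow>
            bij_betw \<sigma> {0..Max (rk ` P)} {0..Max (rk ` P)} \<longrightarrow>
            (\<forall>I\<in>order_ideals P le.
               orbit_avg (row_sigma P le rk (Max (rk ` P)) \<sigma>) (\<lambda>K. real (ddeg le K)) I = c)"
  proof (intro allI impI ballI)
    fix rk :: "'a \<Rightarrow> nat" and \<sigma> I
    assume rkf: "is_rank_function P le rk"
      and bj: "bij_betw \<sigma> {0..Max (rk ` P)} {0..Max (rk ` P)}"
      and I: "I \<in> order_ideals P le"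
    interpret ranked P le rk using assms(1,2) rkf by unfold_locales
    define ts where "ts = map \<sigma> [0..<Suc (Max (rk ` P))]"
    have Phi: "row_sigma P le rk (Max (rk ` P)) \<sigma> = Fs ts"
      unfolding row_sigma_def Fs_def ts_def by (simp add: foldr_map o_def fun_eq_iff)
    have st: "set [0..<Suc (Max (rk ` P))] = {0..Max (rk ` P)}" by auto
    have dist: "distinct ts" unfolding ts_def distinct_map st
      using bij_betw_imp_inj_on[OF bj] by simp
    have setts: "set ts = {0..Max (rk ` P)}" unfolding ts_def set_map st
      using bij_betw_imp_surj_on[OF bj] .
    have pin: "rk p \<in> set ts" if "p \<in> P" for p
      unfolding setts using that finP by (auto intro!: Max_ge)
    show "orbit_avg (row_sigma P le rk (Max (rk ` P)) \<sigma>) (\<lambda>K. real (ddeg le K)) I = c"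
      unfolding Phi c_def
    proof (rule orbit_avg_c[OF assms(4) Fs_ideal Fs_inj _ I])
      fix Ob p assume "Ob \<subseteq> order_ideals P le" "Fs ts ` Ob = Ob" "p \<in> P"
      then show "(\<Sum>K\<in>Ob. tplus P le p K) = (\<Sum>K\<in>Ob. tminus le p K)"
        using Fs_sym[OF dist \<open>p \<in> P\<close> pin[OF \<open>p \<in> P\<close>]] by blast
    qed
  qed
  show ?thesis using part1 part2 by blast
qed

end
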